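(* Let $K$ be a finite field of characteristic $p$, let $d$ be an integer with $\gcd(d,|K|-1)=1$, and let $\sigma\in\mathrm{Gal}(\mathbb{Q}(\zeta_p)/\mathbb{Q})$ be such that $\sigma$ does not fix every value $W_{K,d}(a)$, $a\in K^\times$. Then $$\sum_{a\in K^\times}W_{K,d}(a)\,\sigma\big(W_{K,d}(a)\big)=0.$$
   Context: $\zeta_p$ is a primitive $p$th root of unity over $\mathbb{Q}$. $\psi_K(x)=\exp(2\pi i\,\mathrm{Tr}_{K/\mathbb{F}_p}(x)/p)$ and $W_{K,d}(a)=\sum_{x\in K}\psi_K(x^d+ax)\in\mathbb{Q}(\zeta_p)$. *)

theory Defs
  imports "HOL-Analysis.Analysis"
begin

definition ff_degree :: "'a::{field,finite} itself \<Rightarrow> nat" where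
  "ff_degree _ = (THE n. CARD('a) = CHAR('a) ^ n)"

definition abs_trace :: "'a::{field,finite} \<Rightarrow> 'a" where
  "abs_trace x = (\<Sum>i<ff_degree TYPE('a). x ^ (CHAR('a) ^ i))"

definition trace_nat :: "'a::{field,finite} \<Rightarrow> nat" where
  "trace_nat x = (THE k. k < CHAR('a) \<and> of_nat k = abs_trace x)"

definition psi :: "'a::{field,finite} \<Rightarrow> complex" where
  "psi x = exp (2 * pi * \<i> * of_nat (trace_nat x) / of_nat CHAR('a))"

text \<open>Weil sum W_{K,d}(a) = sum_{x in K} psi(x^d + a x); x^d for integer d uses
power_int (with the convention 0^d = 0 for d < 0).\<close>
definition weil_sum :: "int \<Rightarrow> 'a::{field,finite} \<Rightarrow> complex" where
  "weil_sum d a = (\<Sum>x\<in>UNIV. psi (power_int x d + a * x))"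

definition zeta :: "nat \<Rightarrow> complex" where
  "zeta p = exp (2 * pi * \<i> / of_nat p)"

definition cyclotomic_field :: "nat \<Rightarrow> complex set" where
  "cyclotomic_field p = {z. \<exists>c :: nat \<Rightarrow> rat. z = (\<Sum>k<p. of_rat (c k) * zeta p ^ k)}"

text \<open>sigma in Gal(Q(zeta_p)/Q): a field automorphism of Q(zeta_p)
(every ring automorphism fixes Q).  sigma is given as a function on C;
only its restriction to Q(zeta_p) matters.\<close>
definition galois_cyclo :: "nat \<Rightarrow> (complex \<Rightarrow> complex) \<Rightarrow> bool" where
  "galois_cyclo p \<sigma> \<longleftrightarrow>
     bij_betw \<sigma> (cyclotomic_field p) (cyclotomic_field p) \<and>
     \<sigma> 1 = 1 \<and>
     (\<forall>x\<in>cyclotomic_field p. \<forall>y\<in>cyclotomic_field p.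
         \<sigma> (x + y) = \<sigma> x + \<sigma> y \<and> \<sigma> (x * y) = \<sigma> x * \<sigma> y)"

end

theory Submission
  imports Defs "HOL-Algebra.Sylow" "HOL-Algebra.Multiplicative_Group" "HOL-Computational_Algebra.Computational_Algebra" "HOL-Number_Theory.Cong"
begin

lemma ff_prime: "prime CHAR('a::{field,finite})"
  by (intro prime_CHAR_semidom finite_imp_CHAR_pos) simp

lemma ff_power_card: "(x::'a::{field,finite}) ^ CARD('a) = x"
proof (cases "x = 0")
  case False
  have "x * (\<Prod>y\<in>UNIV-{0}. x * y) = x * x ^ (card (UNIV :: 'a set) - 1) * \<Prod>(UNIV-{0})"
    by (simp add: prod.distrib mult_ac)
  also have "x * x ^ (card (UNIV :: 'a set) - 1) = x ^ Suc (card (UNIV :: 'a set) - 1)"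
    by (subst power_Suc) auto
  also have "Suc (card (UNIV :: 'a set) - 1) = card (UNIV :: 'a set)"
    using finite_UNIV_card_ge_0[where ?'a = 'a] by simp
  also have "(\<Prod>y\<in>UNIV-{0}. x * y) = (\<Prod>y\<in>UNIV-{0}. y)"
    by (rule prod.reindex_bij_witness[of _ "\<lambda>y. y / x" "\<lambda>y. x * y"]) (use False in auto)
  finally show ?thesis
    by simp
qed (use finite_UNIV_card_ge_0[where ?'a = 'a] in auto)

definition addgrp :: "'a::{field,finite} itself \<Rightarrow> 'a monoid" where
  "addgrp _ = \<lparr> carrier = (UNIV :: 'a set), monoid.mult = (+), one = (0 :: 'a) \<rparr>"

lemma addgrp_group: "group (addgrp TYPE('a::{field,finite}))"
proof (rule groupI)
  fix x assume x: "x \<in> carrier (addgrp TYPE('a))"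
  show "\<exists>y\<in>carrier (addgrp TYPE('a)). y \<otimes>\<^bsub>addgrp TYPE('a)\<^esub> x = \<one>\<^bsub>addgrp TYPE('a)\<^esub>"
    by (intro bexI[of _ "-x"]) (auto simp: addgrp_def)
qed (auto simp: addgrp_def add_ac)

lemma addgrp_pow: "x [^]\<^bsub>(addgrp TYPE('a::{field,finite}))\<lparr>carrier := H\<rparr>\<^esub> (n::nat) = of_nat n * (x::'a)"
  by (induction n) (auto simp: addgrp_def algebra_simps)

lemma prime_dvd_card: 
  assumes r: "prime r" "r dvd CARD('a::{field,finite})"
  shows "r = CHAR('a)"
proof -
  let ?G = "addgrp TYPE('a)"
  obtain m where m: "CARD('a) = r * m" using r by blast
  have "order ?G = r ^ 1 * m" by (simp add: order_def addgrp_def m)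
  from sylow_thm[OF r(1) addgrp_group this] obtain H where H: "subgroup H ?G" "card H = r"
    by (auto simp: addgrp_def)
  have "card H \<ge> 2" using H r prime_ge_2_nat by auto
  then have "H \<noteq> {} \<and> H \<noteq> {0}" by auto
  then obtain x where x: "x \<in> H" "x \<noteq> 0" by blast
  interpret grp: group "?G\<lparr>carrier := H\<rparr>" by (rule subgroup.subgroup_is_group[OF H(1) addgrp_group])
  have "x [^]\<^bsub>?G\<lparr>carrier := H\<rparr>\<^esub> order (?G\<lparr>carrier := H\<rparr>) = \<one>\<^bsub>?G\<lparr>carrier := H\<rparr>\<^esub>"
    by (rule grp.pow_order_eq_1) (use x in auto)
  moreover have "order (?G\<lparr>carrier := H\<rparr>) = r" by (simp add: order_def H)
  ultimately have "of_nat r * x = 0" by (simp only: addgrp_pow) (simp add: addgrp_def)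
  with x have "of_nat r = (0::'a)" by simp
  then have "CHAR('a) dvd r" by (simp add: of_nat_eq_0_iff_char_dvd)
  then show ?thesis using r(1) ff_prime[where 'a='a] 
    by (metis prime_nat_iff prime_gt_1_nat nat_neq_iff)
qed

lemma nat_all_factors_power:
  fixes n p :: nat
  assumes "n > 0" "\<And>r. prime r \<Longrightarrow> r dvd n \<Longrightarrow> r = p"
  shows "\<exists>k. n = p ^ k"
  using assms
proof (induction n rule: less_induct)
  case (less n)
  show ?case
  proof (cases "n = 1")
    case True then show ?thesis by (intro exI[of _ 0]) simp
  next
    case False
    then obtain r where r: "prime r" "r dvd n" using prime_factor_nat by blast
    then have rp: "r = p" using less by blast
    then obtain m where m: "n = p * m" using r by blast
    have "m < n" "m > 0" using m less(2) r rp prime_gt_1_nat by (auto simp: m)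
    moreover have "\<And>s. prime s \<Longrightarrow> s dvd m \<Longrightarrow> s = p" using less(3) m by auto
    ultimately obtain k where "m = p ^ k" using less(1) by blast
    then show ?thesis by (intro exI[of _ "Suc k"]) (simp add: m)
  qed
qed

lemma card_prime_power: "\<exists>n. CARD('a::{field,finite}) = CHAR('a) ^ n"
  by (rule nat_all_factors_power) (auto intro: prime_dvd_card)


lemma CHAR_gt1: "CHAR('a::{field,finite}) > 1"
  using ff_prime[where 'a='a] prime_gt_1_nat by blast

lemma CHAR_pos'[simp]: "CHAR('a::{field,finite}) > 0"
  using CHAR_gt1[where 'a='a] by simp

lemma CHAR_ne1[simp]: "CHAR('a::{field,finite}) \<noteq> Suc 0"
  using CHAR_gt1[where 'a='a] by simp

lemma ff_degree_eq: "CARD('a) = CHAR('a) ^ ff_degree TYPE('a::{field,finite})"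
proof -
  have "\<exists>!n. CARD('a) = CHAR('a) ^ n"
    using card_prime_power[where 'a='a] CHAR_gt1[where 'a='a] by auto
  then show ?thesis unfolding ff_degree_def by (rule theI')
qed

lemma card_ge2: "CARD('a::{field,finite}) \<ge> 2"
proof -
  have "card {0::'a, 1} = 2" by simp
  moreover have "card {0::'a, 1} \<le> CARD('a)" by (rule card_mono) auto
  ultimately show ?thesis by simp
qed

lemma ff_degree_pos: "ff_degree TYPE('a::{field,finite}) > 0"
proof (rule ccontr)
  assume "\<not> ?thesis"
  then have "CARD('a) = 1" using ff_degree_eq[where 'a='a] by simp
  then show False using card_ge2[where 'a='a] by simp
qed

lemma frob_sum: "((x::'a::{field,finite}) + y) ^ (CHAR('a) ^ i) = x ^ (CHAR('a) ^ i) + y ^ (CHAR('a) ^ i)"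
  by (rule freshmans_dream') (auto simp: ff_prime)

lemma abs_trace_add: "abs_trace ((x::'a::{field,finite}) + y) = abs_trace x + abs_trace y"
  unfolding abs_trace_def by (simp add: frob_sum sum.distrib)

lemma fixed_pow: assumes "(c::'a::{field,finite}) ^ CHAR('a) = c" shows "c ^ (CHAR('a) ^ i) = c"
proof (induction i)
  case (Suc i)
  have "c ^ (CHAR('a) ^ Suc i) = (c ^ (CHAR('a) ^ i)) ^ CHAR('a)"
    by (simp only: power_Suc2 power_mult)
  then show ?case using Suc assms by simp
qed simp

lemma of_nat_frob: "(of_nat k :: 'a::{field,finite}) ^ CHAR('a) = of_nat k"
proof (induction k)
  case 0 then show ?case using CHAR_gt1[where 'a='a] by simp
next
  case (Suc k)
  have "(of_nat k + 1 :: 'a) ^ CHAR('a) = of_nat k ^ CHAR('a) + 1 ^ CHAR('a)"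
    using frob_sum[of "of_nat k" 1 1] by simp
  then show ?case using Suc by (simp add: add.commute)
qed

lemma abs_trace_scale: assumes "(c::'a::{field,finite}) ^ CHAR('a) = c"
  shows "abs_trace (c * x) = c * abs_trace x"
proof -
  have *: "(c * x) ^ (CHAR('a) ^ i) = c * x ^ (CHAR('a) ^ i)" for i
    using power_mult_distrib[of c x "CHAR('a) ^ i"] fixed_pow[OF assms, of i] by metis
  have "abs_trace (c * x) = (\<Sum>i<ff_degree TYPE('a). c * x ^ (CHAR('a) ^ i))"
    unfolding abs_trace_def using * by (intro sum.cong) auto
  then show ?thesis unfolding abs_trace_def by (simp only: sum_distrib_left)
qed



lemma abs_trace_frob: "abs_trace (x::'a::{field,finite}) ^ CHAR('a) = abs_trace x"
proof -
  let ?n = "ff_degree TYPE('a)"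
  let ?p = "CHAR('a)"
  have "abs_trace x ^ ?p = (\<Sum>i<?n. (x ^ (?p ^ i)) ^ ?p)"
    unfolding abs_trace_def by (rule freshmans_dream_sum) (auto simp: ff_prime)
  also have "\<dots> = (\<Sum>i<?n. x ^ (?p ^ Suc i))"
    by (simp add: power_mult[symmetric] mult.commute)
  also have "\<dots> = (\<Sum>i<Suc ?n. x ^ (?p ^ i)) - x"
    by (subst sum.lessThan_Suc_shift) simp
  also have "\<dots> = abs_trace x"
    by (simp add: abs_trace_def ff_degree_eq[symmetric] ff_power_card)
  finally show ?thesis .
qed

lemma prime_field_elem:
  assumes "(y::'a::{field,finite}) ^ CHAR('a) = y"
  shows "\<exists>k<CHAR('a). of_nat k = y"
proof -
  let ?p = "CHAR('a)"
  define P :: "'a poly" where "P = Polynomial.monom 1 ?p - Polynomial.monom 1 1"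
  have p1: "?p \<noteq> 1" using CHAR_gt1[where 'a='a] by simp
  have "Polynomial.coeff P ?p = 1" using p1 by (simp add: P_def eq_commute[of "Suc 0"])
  then have P0: "P \<noteq> 0" by auto
  have "Polynomial.degree P \<le> ?p" unfolding P_def
    using CHAR_gt1[where 'a='a] by (intro degree_diff_le) (auto intro: order.trans[OF degree_monom_le])
  then have cardR: "card {x. poly P x = 0} \<le> ?p" using card_poly_roots_bound[OF P0] by linarith
  have sub: "of_nat ` {..<?p} \<subseteq> {x. poly P x = 0}"
    by (auto simp: P_def poly_monom of_nat_frob)
  have "inj_on (of_nat :: nat \<Rightarrow> 'a) {..<?p}"
    by (auto simp: inj_on_def of_nat_eq_iff_cong_CHAR intro: cong_less_modulus_unique_nat)
  then have "card (of_nat ` {..<?p} :: 'a set) = ?p" by (simp add: card_image)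
  then have "of_nat ` {..<?p} = {x. poly P x = 0}"
    using sub cardR by (intro card_seteq) auto
  moreover have "y \<in> {x. poly P x = 0}" using assms by (simp add: P_def poly_monom)
  ultimately show ?thesis by (metis (mono_tags, lifting) imageE lessThan_iff)
qed

lemma trace_nat_props: "trace_nat (x::'a::{field,finite}) < CHAR('a) \<and> of_nat (trace_nat x) = abs_trace x"
proof -
  have "\<exists>!k. k < CHAR('a) \<and> of_nat k = abs_trace x"
    using prime_field_elem[OF abs_trace_frob[of x]]
    by (metis of_nat_eq_iff_cong_CHAR cong_less_modulus_unique_nat)
  then show ?thesis unfolding trace_nat_def by (rule theI')
qed

lemma abs_trace_nonzero: "\<exists>b::'a::{field,finite}. abs_trace b \<noteq> 0"
proof (rule ccontr)
  assume "\<not> ?thesis"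
  then have all: "\<And>b::'a. abs_trace b = 0" by blast
  let ?p = "CHAR('a)" let ?n = "ff_degree TYPE('a)"
  define Q :: "'a poly" where "Q = (\<Sum>i<?n. Polynomial.monom 1 (?p ^ i))"
  have pv: "poly Q x = abs_trace x" for x by (simp add: Q_def poly_sum poly_monom abs_trace_def)
  have inj: "inj (\<lambda>i. ?p ^ i)" using CHAR_gt1[where 'a='a] by (auto simp: inj_def)
  have n1: "?n - 1 < ?n" using ff_degree_pos[where 'a='a] by simp
  have "Polynomial.coeff Q (?p ^ (?n - 1)) = (\<Sum>i<?n. if ?p ^ i = ?p ^ (?n - 1) then 1 else 0)"
    by (simp add: Q_def coeff_sum)
  also have "\<dots> = (\<Sum>i\<in>{?n - 1}. 1)"
    using inj n1 by (intro sum.mono_neutral_cong_right) (auto simp: inj_def)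
  finally have "Polynomial.coeff Q (?p ^ (?n - 1)) = 1" by simp
  then have Q0: "Q \<noteq> 0" by auto
  have "Polynomial.degree Q \<le> ?p ^ (?n - 1)" unfolding Q_def
    by (intro degree_sum_le) (auto intro!: order.trans[OF degree_monom_le] power_increasing
        simp: Suc_le_eq CHAR_gt1[where 'a='a, THEN less_imp_le])
  also have "\<dots> < ?p ^ ?n" using CHAR_gt1[where 'a='a] n1 by (intro power_strict_increasing) auto
  also have "\<dots> = card {x::'a. poly Q x = 0}" by (simp add: pv all ff_degree_eq[symmetric])
  finally show False using card_poly_roots_bound[OF Q0] by linarith
qed




lemma zeta_pow: "n > 0 \<Longrightarrow> zeta n ^ j = exp (2 * of_real pi * \<i> * of_nat j / of_nat n)"
  unfolding zeta_def by (simp add: exp_of_nat_mult[symmetric] mult_ac)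

lemma zeta_pow_eq: "n > 0 \<Longrightarrow> zeta n ^ a = zeta n ^ b \<longleftrightarrow> a mod n = b mod n"
  using complex_root_unity_eq[of n a b] by (simp add: zeta_pow)

lemma psi_zeta: "psi (x::'a::{field,finite}) = zeta CHAR('a) ^ trace_nat x"
  unfolding psi_def by (simp add: zeta_pow)

lemma trace_cong: "[trace_nat (x::'a::{field,finite}) = k] (mod CHAR('a)) \<longleftrightarrow> abs_trace x = of_nat k"
  using trace_nat_props[of x] of_nat_eq_iff_cong_CHAR[of "trace_nat x" k, where 'a='a] by simp

lemma psi_eqI: assumes "abs_trace (x::'a::{field,finite}) = of_nat k" shows "psi x = zeta CHAR('a) ^ k"
proof -
  have "[trace_nat x = k] (mod CHAR('a))" using assms trace_cong by blast
  then show ?thesis by (simp add: psi_zeta zeta_pow_eq cong_def)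
qed

lemma psi_add: "psi ((x::'a::{field,finite}) + y) = psi x * psi y"
proof -
  have "abs_trace (x + y) = of_nat (trace_nat x + trace_nat y)"
    by (simp add: abs_trace_add trace_nat_props)
  from psi_eqI[OF this] show ?thesis by (simp add: psi_zeta power_add)
qed

lemma psi_scale: "psi (of_nat k * (x::'a::{field,finite})) = psi x ^ k"
proof -
  have "abs_trace (of_nat k * x) = of_nat k * abs_trace x" by (rule abs_trace_scale[OF of_nat_frob])
  also have "\<dots> = of_nat (trace_nat x * k)" by (simp add: trace_nat_props)
  finally have "abs_trace (of_nat k * x) = of_nat (trace_nat x * k)" .
  from psi_eqI[OF this] show ?thesis by (simp add: psi_zeta power_mult)
qed

lemma psi_zero: "psi (0::'a::{field,finite}) = 1"
proof -
  have "abs_trace (0::'a) = of_nat 0" by (simp add: abs_trace_def zero_power)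
  from psi_eqI[OF this] show ?thesis by simp
qed

lemma psi_sum: "(\<Sum>x\<in>UNIV. psi (x::'a::{field,finite})) = 0"
proof -
  obtain b :: 'a where b: "abs_trace b \<noteq> 0" using abs_trace_nonzero by blast
  have "psi b \<noteq> 1"
  proof
    assume "psi b = 1"
    then have "zeta CHAR('a) ^ trace_nat b = zeta CHAR('a) ^ 0" by (simp add: psi_zeta)
    then have "trace_nat b mod CHAR('a) = 0 mod CHAR('a)" by (subst (asm) zeta_pow_eq) simp_all
    then have "trace_nat b = 0" using trace_nat_props[of b] by simp
    then show False using b trace_nat_props[of b] by simp
  qed
  have "(\<Sum>x\<in>UNIV. psi (x::'a)) = (\<Sum>x\<in>UNIV. psi (b + x))"
    by (rule sum.reindex_bij_betw[of "\<lambda>x. b + x" UNIV UNIV psi, symmetric]) (auto simp: bij_betw_def inj_on_def image_iff intro: exI[of _ "x - b" for x])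
  also have "\<dots> = psi b * (\<Sum>x\<in>UNIV. psi (x::'a))" by (simp add: psi_add sum_distrib_left)
  finally show ?thesis using \<open>psi b \<noteq> 1\<close>
    by (metis mult_cancel_right2 mult.commute)
qed

lemma psi_orth: "(\<Sum>a\<in>UNIV. psi (a * (z::'a::{field,finite}))) = (if z = 0 then of_nat CARD('a) else 0)"
proof (cases "z = 0")
  case True then show ?thesis by (simp add: psi_zero)
next
  case False
  have "(\<Sum>a\<in>UNIV. psi (a * z)) = (\<Sum>x\<in>UNIV. psi (x::'a))"
    by (rule sum.reindex_bij_betw[of "\<lambda>a. a * z" UNIV UNIV psi]) (use False in \<open>auto simp: bij_betw_def inj_on_def image_iff intro!: exI[of _ "x / z" for x]\<close>)
  then show ?thesis using False psi_sum by simp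
qed




lemma pow_card_minus1: "(x::'a::{field,finite}) \<noteq> 0 \<Longrightarrow> x ^ (CARD('a) - 1) = 1"
proof -
  assume x: "x \<noteq> 0"
  have "x * x ^ (CARD('a) - 1) = x ^ CARD('a)"
    using card_ge2[where 'a='a] by (simp flip: power_Suc)
  also have "\<dots> = x * 1" by (simp add: ff_power_card)
  finally show ?thesis using x by simp
qed

lemma power_int_inj:
  assumes g: "gcd d (int CARD('a::{field,finite}) - 1) = 1" and d: "d \<noteq> 0"
  shows "inj (\<lambda>x::'a. power_int x d)"
proof -
  obtain u v where uv: "u * d + v * (int CARD('a) - 1) = 1" using bezout_int[of d "int CARD('a) - 1"] g by auto
  have inv: "power_int (power_int x d) u = x" if x: "x \<noteq> 0" for x :: 'a
  proof -
    have q1: "int CARD('a) - 1 = int (CARD('a) - 1)" using card_ge2[where 'a='a] by simp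
    have "x = power_int x (d * u + (int CARD('a) - 1) * v)" using uv by (simp add: mult.commute)
    also have "\<dots> = power_int x (d * u) * power_int x ((int CARD('a) - 1) * v)"
      using x by (rule power_int_add[OF disjI1])
    also have "\<dots> = power_int (power_int x d) u"
      using pow_card_minus1[OF x] by (simp add: power_int_mult q1 del: of_nat_diff)
    finally show ?thesis by simp
  qed
  show ?thesis
  proof (rule injI)
    fix x y :: 'a assume eq: "power_int x d = power_int y d"
    show "x = y"
    proof (cases "x = 0 \<or> y = 0")
      case True then show ?thesis using eq d by auto
    next
      case False then show ?thesis using inv eq by metis
    qed
  qed
qed

lemma power_int_bij:
  assumes "gcd d (int CARD('a::{field,finite}) - 1) = 1" "d \<noteq> 0"
  shows "bij (\<lambda>x::'a. power_int x d)"
  using power_int_inj[OF assms] finite_UNIV_inj_surj[of "\<lambda>x::'a. power_int x d"] by (simp add: bij_def)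

lemma sum_bij_UNIV: "bij (h::'a::finite \<Rightarrow> 'a) \<Longrightarrow> (\<Sum>x\<in>UNIV. g (h x)) = (\<Sum>x\<in>UNIV. (g x :: complex))"
  by (rule sum.reindex_bij_betw[of h UNIV UNIV g])

lemma mult_bij: "(c::'a::field) \<noteq> 0 \<Longrightarrow> bij (\<lambda>x. c * x)"
  by (rule bij_betw_byWitness[where f'="\<lambda>x. x / c"]) auto

lemma zeta_pow_n: "n > 0 \<Longrightarrow> zeta n ^ (j mod n) = zeta n ^ j"
  by (simp add: zeta_pow_eq)

lemma zeta_in: assumes "n > 0" shows "zeta n ^ j \<in> cyclotomic_field n"
proof -
  define c :: "nat \<Rightarrow> rat" where "c k = (if k = j mod n then 1 else 0)" for k
  have "(\<Sum>k<n. of_rat (c k) * zeta n ^ k) = (\<Sum>k\<in>{j mod n}. zeta n ^ k)"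
    using assms by (intro sum.mono_neutral_cong_right) (auto simp: c_def)
  also have "\<dots> = zeta n ^ j" using zeta_pow_n[OF assms] by simp
  finally show ?thesis unfolding cyclotomic_field_def by (auto intro!: exI[of _ c])
qed

lemma add_in: assumes "x \<in> cyclotomic_field n" "y \<in> cyclotomic_field n"
  shows "x + y \<in> cyclotomic_field n"
proof -
  obtain c1 c2 where c: "x = (\<Sum>k<n. of_rat (c1 k) * zeta n ^ k)" "y = (\<Sum>k<n. of_rat (c2 k) * zeta n ^ k)"
    using assms unfolding cyclotomic_field_def by auto
  have "x + y = (\<Sum>k<n. of_rat (c1 k + c2 k) * zeta n ^ k)"
    by (simp add: c sum.distrib of_rat_add distrib_right)
  then have "\<exists>c. x + y = (\<Sum>k<n. of_rat (c k) * zeta n ^ k)" by (intro exI[of _ "\<lambda>k. c1 k + c2 k"])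
  then show ?thesis by (simp add: cyclotomic_field_def)
qed

lemma zero_in: "0 \<in> cyclotomic_field n"
  unfolding cyclotomic_field_def by (auto intro!: exI[of _ "\<lambda>_. 0"])

lemma sum_in: "(\<And>a. a \<in> A \<Longrightarrow> f a \<in> cyclotomic_field n) \<Longrightarrow> sum f A \<in> cyclotomic_field n"
  by (induction A rule: infinite_finite_induct) (auto simp: zero_in add_in)

context
  fixes n :: nat and \<sigma> :: "complex \<Rightarrow> complex"
  assumes gal: "galois_cyclo n \<sigma>" and n: "n > 1"
begin

lemma sig_add: "x \<in> cyclotomic_field n \<Longrightarrow> y \<in> cyclotomic_field n \<Longrightarrow> \<sigma> (x + y) = \<sigma> x + \<sigma> y"
  using gal unfolding galois_cyclo_def by blast

lemma sig_mult: "x \<in> cyclotomic_field n \<Longrightarrow> y \<in> cyclotomic_field n \<Longrightarrow> \<sigma> (x * y) = \<sigma> x * \<sigma> y"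
  using gal unfolding galois_cyclo_def by blast

lemma sig_zero: "\<sigma> 0 = 0"
  using sig_add[OF zero_in zero_in] by simp

lemma sig_sum: "(\<And>a. a \<in> A \<Longrightarrow> f a \<in> cyclotomic_field n) \<Longrightarrow> \<sigma> (sum f A) = (\<Sum>a\<in>A. \<sigma> (f a))"
proof (induction A rule: infinite_finite_induct)
  case (insert x F)
  then show ?case by (simp add: sig_add sum_in)
qed (auto simp: sig_zero)

lemma sig_zeta_pow: "\<sigma> (zeta n ^ j) = \<sigma> (zeta n) ^ j"
proof (induction j)
  case 0 then show ?case using gal by (simp add: galois_cyclo_def)
next
  case (Suc j)
  have "\<sigma> (zeta n ^ Suc j) = \<sigma> (zeta n ^ 1 * zeta n ^ j)" by simp
  also have "\<dots> = \<sigma> (zeta n ^ 1) * \<sigma> (zeta n ^ j)" using n by (intro sig_mult zeta_in) auto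
  finally show ?case using Suc by simp
qed

lemma sig_zeta: "\<exists>k. 0 < k \<and> k < n \<and> \<sigma> (zeta n) = zeta n ^ k"
proof -
  have "\<sigma> (zeta n) ^ n = \<sigma> (zeta n ^ n)" by (simp add: sig_zeta_pow)
  also have "zeta n ^ n = zeta n ^ 0" using n by (subst zeta_pow_eq) auto
  also have "\<sigma> (zeta n ^ 0) = 1" using gal by (simp add: galois_cyclo_def)
  finally have "\<sigma> (zeta n) \<in> {z. z ^ n = 1}" by simp
  then obtain k where k: "k < n" "\<sigma> (zeta n) = zeta n ^ k"
    using complex_roots_unity[of n] n by (auto simp: zeta_pow)
  have "k \<noteq> 0"
  proof
    assume "k = 0"
    then have "\<sigma> (zeta n ^ 1) = \<sigma> (zeta n ^ 0)" using k gal by (simp add: galois_cyclo_def)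
    moreover have "inj_on \<sigma> (cyclotomic_field n)" using gal by (simp add: galois_cyclo_def bij_betw_def)
    ultimately have "zeta n ^ 1 = zeta n ^ 0" using zeta_in n by (meson inj_onD less_imp_le less_le_trans zero_less_one)
    then have "1 mod n = 0 mod n" using n by (subst (asm) zeta_pow_eq) auto
    then show False using n by simp
  qed
  then show ?thesis using k by blast
qed

end




lemma full_sum:
  fixes \<kappa> :: "'a::{field,finite}"
  assumes bij: "bij (\<lambda>x::'a. power_int x d)" and odd: "odd d" and c: "\<kappa> - power_int \<kappa> d \<noteq> 0"
  shows "(\<Sum>a\<in>UNIV. weil_sum d a * (\<Sum>y\<in>UNIV. psi (\<kappa> * (power_int y d + a * y)))) = 0"
proof -
  define f where "f x y = psi (power_int x d + \<kappa> * power_int y d)" for x y :: 'a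
  define F where "F a x y = f x y * psi (a * (x + \<kappa> * y))" for a x y :: 'a
  have step1: "weil_sum d a * (\<Sum>y\<in>UNIV. psi (\<kappa> * (power_int y d + a * y))) = (\<Sum>x\<in>UNIV. \<Sum>y\<in>UNIV. F a x y)" for a
    unfolding weil_sum_def sum_product F_def f_def
    by (intro sum.cong refl) (simp add: psi_add[symmetric] algebra_simps)
  have "(\<Sum>a\<in>UNIV. weil_sum d a * (\<Sum>y\<in>UNIV. psi (\<kappa> * (power_int y d + a * y))))
      = (\<Sum>a\<in>UNIV. \<Sum>x\<in>UNIV. \<Sum>y\<in>UNIV. F a x y)" by (simp only: step1)
  also have "\<dots> = (\<Sum>x\<in>UNIV. \<Sum>a\<in>UNIV. \<Sum>y\<in>UNIV. F a x y)" by (rule sum.swap)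
  also have "\<dots> = (\<Sum>x\<in>UNIV. \<Sum>y\<in>UNIV. \<Sum>a\<in>UNIV. F a x y)" by (intro sum.cong refl sum.swap)
  also have "\<dots> = (\<Sum>x\<in>UNIV. \<Sum>y\<in>UNIV. f x y * (if x + \<kappa> * y = 0 then of_nat CARD('a) else 0))"
    unfolding F_def by (simp only: sum_distrib_left[symmetric] psi_orth)
  also have "\<dots> = (\<Sum>y\<in>UNIV. \<Sum>x\<in>UNIV. f x y * (if x + \<kappa> * y = 0 then of_nat CARD('a) else 0))"
    by (rule sum.swap)
  also have "\<dots> = (\<Sum>y\<in>UNIV. \<Sum>x\<in>UNIV. if x = - (\<kappa> * y) then f x y * of_nat CARD('a) else 0)"
    by (intro sum.cong refl) (auto simp: eq_neg_iff_add_eq_0)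
  also have "\<dots> = (\<Sum>y\<in>UNIV. f (- (\<kappa> * y)) y * of_nat CARD('a))"
    by (rule sum.cong[OF refl], subst sum.delta) auto
  also have "\<dots> = (\<Sum>y\<in>UNIV. psi ((\<kappa> - power_int \<kappa> d) * power_int y d) * of_nat CARD('a))"
    unfolding f_def using odd by (intro sum.cong refl) (simp add: power_int_mult_distrib algebra_simps)
  also have "\<dots> = of_nat CARD('a) * (\<Sum>y\<in>UNIV. psi ((\<kappa> - power_int \<kappa> d) * power_int y d))"
    by (simp add: sum_distrib_left mult.commute)
  also have "(\<Sum>y\<in>UNIV. psi ((\<kappa> - power_int \<kappa> d) * power_int y d)) = (\<Sum>y\<in>UNIV. psi ((\<kappa> - power_int \<kappa> d) * y))"
    by (rule sum_bij_UNIV[OF bij, of "\<lambda>z. psi ((\<kappa> - power_int \<kappa> d) * z)"])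
  also have "\<dots> = (\<Sum>y\<in>UNIV. psi (y::'a))"
    by (rule sum_bij_UNIV[OF mult_bij[OF c], of psi])
  also have "\<dots> = 0" by (rule psi_sum)
  finally show ?thesis by simp
qed

theorem corollary5p7:
  fixes d :: int and \<sigma> :: "complex \<Rightarrow> complex"
  assumes "gcd d (int CARD('a::{field,finite}) - 1) = 1"
    and "galois_cyclo CHAR('a) \<sigma>"
    and "\<exists>a::'a. a \<noteq> 0 \<and> \<sigma> (weil_sum d a) \<noteq> weil_sum d a"
  shows "(\<Sum>a\<in>UNIV - {0::'a}. weil_sum d a * \<sigma> (weil_sum d a)) = 0"
proof -
  have n: "CHAR('a) > 1" by (rule CHAR_gt1)
  obtain k where k: "0 < k" "k < CHAR('a)" "\<sigma> (zeta CHAR('a)) = zeta CHAR('a) ^ k"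
    using sig_zeta[OF assms(2) n] by blast
  define \<kappa> :: 'a where "\<kappa> = of_nat k"
  have \<kappa>0: "\<kappa> \<noteq> 0" using k by (auto simp: \<kappa>_def of_nat_eq_0_iff_char_dvd dest: dvd_imp_le)
  have psi_in: "psi (x::'a) \<in> cyclotomic_field CHAR('a)" for x
    by (simp add: psi_zeta zeta_in)
  have sig_psi: "\<sigma> (psi x) = psi (\<kappa> * x)" for x :: 'a
  proof -
    have "\<sigma> (psi x) = \<sigma> (zeta CHAR('a)) ^ trace_nat x"
      by (simp add: psi_zeta sig_zeta_pow[OF assms(2) n])
    also have "\<dots> = (zeta CHAR('a) ^ trace_nat x) ^ k"
      by (simp add: k(3) power_mult[symmetric] mult.commute)
    also have "\<dots> = psi (\<kappa> * x)" unfolding \<kappa>_def psi_scale by (simp add: psi_zeta)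
    finally show ?thesis .
  qed
  have sigW: "\<sigma> (weil_sum d a) = (\<Sum>x\<in>UNIV. psi (\<kappa> * (power_int x d + a * x)))" for a :: 'a
    unfolding weil_sum_def by (simp add: sig_sum[OF assms(2) n] psi_in sig_psi)
  show ?thesis
  proof (cases "power_int \<kappa> d = \<kappa>")
    case True
    have "\<sigma> (weil_sum d a) = weil_sum d a" for a :: 'a
    proof -
      have "\<sigma> (weil_sum d a) = (\<Sum>x\<in>UNIV. psi (power_int (\<kappa> * x) d + a * (\<kappa> * x)))"
        unfolding sigW by (intro sum.cong refl) (simp add: power_int_mult_distrib True algebra_simps)
      also have "\<dots> = weil_sum d a" unfolding weil_sum_def
        by (rule sum_bij_UNIV[OF mult_bij[OF \<kappa>0], of "\<lambda>y. psi (power_int y d + a * y)"])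
      finally show ?thesis .
    qed
    then show ?thesis using assms(3) by blast
  next
    case False
    have "\<kappa> \<noteq> 1" using False by auto
    have p2: "CHAR('a) \<noteq> 2"
    proof
      assume "CHAR('a) = 2"
      then have "k = 1" using k by simp
      then show False using \<open>\<kappa> \<noteq> 1\<close> by (simp add: \<kappa>_def)
    qed
    then have "odd CHAR('a)" using ff_prime[where 'a='a] by (intro prime_odd_nat) (use n in auto)
    moreover obtain m where "CARD('a) = CHAR('a) ^ m" using ff_degree_eq by blast
    ultimately have "odd CARD('a)" by simp
    then have "even (int CARD('a) - 1)" by simp
    then have od: "odd d"
    proof (intro notI)
      assume e: "even (int CARD('a) - 1)" and "even d"
      then have "(2::int) dvd gcd d (int CARD('a) - 1)" by (intro gcd_greatest) auto
      then show False using assms(1) by simp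
    qed
    then have d0: "d \<noteq> 0" by auto
    have bij: "bij (\<lambda>x::'a. power_int x d)" by (rule power_int_bij[OF assms(1) d0])
    have c: "\<kappa> - power_int \<kappa> d \<noteq> 0" using False by simp
    have W0: "weil_sum d (0::'a) = 0"
      unfolding weil_sum_def using sum_bij_UNIV[OF bij, of psi] by (simp add: psi_sum)
    have full: "(\<Sum>a\<in>UNIV. weil_sum d (a::'a) * \<sigma> (weil_sum d a)) = 0"
      unfolding sigW by (rule full_sum[OF bij od c])
    have "(\<Sum>a\<in>UNIV. weil_sum d (a::'a) * \<sigma> (weil_sum d a)) = weil_sum d (0::'a) * \<sigma> (weil_sum d (0::'a)) + (\<Sum>a\<in>UNIV - {0::'a}. weil_sum d a * \<sigma> (weil_sum d a))"
      by (rule sum.remove[where g="\<lambda>a::'a. weil_sum d a * \<sigma> (weil_sum d a)"]) auto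
    then show ?thesis using full W0 by simp
  qed
qed


end
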